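(* Let $m\ge1$ be an integer, let $y\in(1,H]$ for some real $H>1$, and let $\theta_1,\ldots,\theta_m\in[0,\pi]$. Let \[ P(t)=(t-y)(t-y^{-1})\prod_{k=1}^m(t-e^{i\theta_k})(t-e^{-i\theta_k})=t^{2m+2}+a_1t^{2m+1}+\cdots+a_{m+1}t^{m+1}+\cdots+a_1t+1, \] and for indices $j>m+1$ write $a_j:=a_{2m+2-j}$ (so that $a_j$ is the coefficient of both $t^{j}$ and $t^{2m+2-j}$). Put $z_0:=y+y^{-1}$ and $z_k:=2\cos\theta_k$ for $1\le k\le m$. Then for $1\le i\le\lfloor m/2\rfloor+1$, \[ a_{2i-1}=-\sum_{j=0}^{i-1}\binom{m-2j}{i-j-1}\sum_{0\le k_1<\cdots<k_{2j+1}\le m}\ \prod_{s=1}^{2j+1}z_{k_s},\qquad a_{2i}=\sum_{j=0}^{i}\binom{m-2j+1}{i-j}\sum_{0\le k_1<\cdots<k_{2j}\le m}\ \prod_{s=1}^{2j}z_{k_s}. \] *)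

theory Defs
  imports Complex_Main "HOL-Computational_Algebra.Polynomial"
begin

definition palP :: "nat \<Rightarrow> real \<Rightarrow> (nat \<Rightarrow> real) \<Rightarrow> complex poly" where
  "palP m y \<theta> = [:- complex_of_real y, 1:] * [:- complex_of_real (1 / y), 1:] *
     (\<Prod>k\<in>{1..m}. [:- cis (\<theta> k), 1:] * [:- cis (- \<theta> k), 1:])"

definition acoef :: "nat \<Rightarrow> real \<Rightarrow> (nat \<Rightarrow> real) \<Rightarrow> nat \<Rightarrow> complex" where
  "acoef m y \<theta> j = (if j \<le> m + 1 then coeff (palP m y \<theta>) (2*m + 2 - j)
                     else coeff (palP m y \<theta>) j)"

definition zval :: "real \<Rightarrow> (nat \<Rightarrow> real) \<Rightarrow> nat \<Rightarrow> real" where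
  "zval y \<theta> k = (if k = 0 then y + 1 / y else 2 * cos (\<theta> k))"

definition esum :: "nat \<Rightarrow> real \<Rightarrow> (nat \<Rightarrow> real) \<Rightarrow> nat \<Rightarrow> real" where
  "esum m y \<theta> r = (\<Sum>S | S \<subseteq> {0..m} \<and> card S = r. \<Prod>k\<in>S. zval y \<theta> k)"

end

theory Submission
  imports Defs
begin


definition cf :: "nat \<Rightarrow> nat \<Rightarrow> nat \<Rightarrow> nat" where
  "cf n s j = (if s \<le> j \<and> even (j - s) then (n - s) choose ((j - s) div 2) else 0)"

lemma coeff_q_pow:
  "coeff ([:1,0,1:] ^ N :: 'a::comm_ring_1 poly) l = (if even l then of_nat (N choose (l div 2)) else 0)"
proof -
  have q: "([:1,0,1:] :: 'a poly) = monom 1 2 + 1"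
    by (simp add: monom_altdef numeral_2_eq_2 power2_eq_square one_pCons)
  have "([:1,0,1:] :: 'a poly) ^ N = (\<Sum>k\<le>N. of_nat (N choose k) * monom 1 (2*k) * 1 ^ (N - k))"
    unfolding q binomial_ring by (simp add: monom_power power_mult)
  then have "coeff ([:1,0,1:] ^ N :: 'a poly) l = (\<Sum>k\<le>N. of_nat (N choose k) * (if l = 2*k then 1 else 0))"
    by (auto simp: coeff_sum of_nat_poly coeff_monom intro!: sum.cong)
  also have "\<dots> = (if even l then of_nat (N choose (l div 2)) else 0)"
  proof (cases "even l")
    case True
    then obtain h where h: "l = 2*h" by blast
    have "(\<Sum>k\<le>N. of_nat (N choose k) * (if l = 2*k then 1 else 0) :: 'a) = (\<Sum>k\<le>N. if k = h then of_nat (N choose k) else 0)"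
      by (rule sum.cong) (auto simp: h)
    also have "\<dots> = of_nat (N choose h)" by (simp add: sum.delta binomial_eq_0)
    finally show ?thesis using h True by simp
  next
    case False
    then show ?thesis by (auto intro!: sum.neutral)
  qed
  finally show ?thesis .
qed

lemma prod_monom1: "finite S \<Longrightarrow> (\<Prod>k\<in>S. monom (f k) (Suc 0)) = (monom (\<Prod>k\<in>S. f k) (card S) :: 'a::comm_ring_1 poly)"
  by (induction S rule: finite_induct) (auto simp: mult_monom)

lemma coeff_prod_quad:
  fixes w :: "'b \<Rightarrow> 'a::comm_ring_1"
  assumes "finite A"
  shows "coeff (\<Prod>k\<in>A. [:1, - w k, 1:]) j =
     (\<Sum>s=0..card A. (-1)^s * of_nat (cf (card A) s j) * (\<Sum>S | S \<subseteq> A \<and> card S = s. \<Prod>k\<in>S. w k))"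
proof -
  have e: "\<And>k. [:1, - w k, 1:] = monom (- w k) 1 + [:1,0,1:]"
    by (simp add: monom_altdef)
  have "(\<Prod>k\<in>A. [:1, - w k, 1:]) = (\<Sum>X\<in>Pow A. monom (\<Prod>k\<in>X. - w k) (card X) * [:1,0,1:] ^ (card A - card X))"
    unfolding e prod_add[OF assms]
    by (rule sum.cong) (auto simp: prod_monom1[OF finite_subset[OF _ assms]] card_Diff_subset finite_subset[OF _ assms])
  then have "coeff (\<Prod>k\<in>A. [:1, - w k, 1:]) j = (\<Sum>X\<in>Pow A. (-1)^card X * of_nat (cf (card A) (card X) j) * (\<Prod>k\<in>X. w k))"
    apply (simp only: coeff_sum coeff_monom_mult coeff_q_pow)
    apply (rule sum.cong, simp)
    apply (auto simp: cf_def prod_uminus finite_subset[OF _ assms] even_diff_iff)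
    done
  also have "\<dots> = (\<Sum>s\<in>{0..card A}. \<Sum>X\<in>{X. X \<in> Pow A \<and> card X = s}. (-1)^card X * of_nat (cf (card A) (card X) j) * (\<Prod>k\<in>X. w k))"
    by (rule sum.group[symmetric]) (auto simp: assms card_mono)
  also have "\<dots> = (\<Sum>s=0..card A. (-1)^s * of_nat (cf (card A) s j) * (\<Sum>S | S \<subseteq> A \<and> card S = s. \<Prod>k\<in>S. w k))"
    by (rule sum.cong) (auto simp: sum_distrib_left intro!: sum.cong)
  finally show ?thesis .
qed


lemma cf_sym:
  assumes "s \<le> n" "j \<le> 2*n"
  shows "cf n s (2*n - j) = cf n s j"
proof (cases "s \<le> j \<and> s \<le> 2*n - j")
  case True
  have par: "even (2*n - j - s) = even (j - s)"
  proof -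
    have "2*n - j - s + (j - s) = 2*(n - s)" using True assms by linarith
    then have "even (2*n - j - s + (j - s))" by simp
    then show ?thesis by auto
  qed
  show ?thesis
  proof (cases "even (j - s)")
    case ev: True
    then obtain h where h: "j - s = 2*h" by blast
    have d1: "2*n - j - s = 2*(n - s - h)" using h True assms by linarith
    have hl: "h \<le> n - s" using h True assms by linarith
    have "(n - s) choose h = (n - s) choose (n - s - h)" using binomial_symmetric[OF hl] .
    then show ?thesis unfolding cf_def using True ev par d1 h by simp
  next
    case False
    then show ?thesis unfolding cf_def using par by auto
  qed
next
  case False
  then have "j < s \<or> 2*n - j < s" by auto
  then show ?thesis
  proof
    assume js: "j < s"
    have "(n - s) choose ((2*n - j - s) div 2) = 0" if ev: "even (2*n - j - s)"
    proof -
      obtain h where h: "2*n - j - s = 2*h" using ev by blast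
      have "n - s < h" using h js assms by linarith
      then show ?thesis using h by (simp add: binomial_eq_0)
    qed
    then show ?thesis using js unfolding cf_def by auto
  next
    assume js: "2*n - j < s"
    have "(n - s) choose ((j - s) div 2) = 0" if ev: "even (j - s)" and sj: "s \<le> j"
    proof -
      obtain h where h: "j - s = 2*h" using ev by blast
      have "n - s < h" using h js assms sj by linarith
      then show ?thesis using h by (simp add: binomial_eq_0)
    qed
    then show ?thesis using js unfolding cf_def by auto
  qed
qed

lemma sum_even_odd: "(\<Sum>s<2*(N::nat). f s) = (\<Sum>j<N. f (2*j) + f (2*j+1))"
proof (induction N)
  case 0 then show ?case by simp
next
  case (Suc N)
  have e: "2 * Suc N = Suc (Suc (2*N))" by simp
  show ?case unfolding e sum.lessThan_Suc Suc by (simp add: add.assoc)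
qed

lemma esum_zero: "m + 1 < r \<Longrightarrow> esum m y \<theta> r = 0"
proof -
  assume h: "m + 1 < r"
  have E: "{S. S \<subseteq> {0..m} \<and> card S = r} = {}"
  proof (rule ccontr)
    assume "{S. S \<subseteq> {0..m} \<and> card S = r} \<noteq> {}"
    then obtain S where "S \<subseteq> {0..m}" "card S = r" by auto
    then have "r \<le> card {0..m}" using card_mono[of "{0..m}" S] by simp
    then show False using h by simp
  qed
  show ?thesis unfolding esum_def E by simp
qed

lemma palP_eq:
  assumes "y \<noteq> 0"
  shows "palP m y \<theta> = (\<Prod>k\<in>{0..m}. [:1, - complex_of_real (zval y \<theta> k), 1:])"
proof -
  have a: "[:- complex_of_real y, 1:] * [:- complex_of_real (1 / y), 1:] = [:1, - complex_of_real (zval y \<theta> 0), 1:]"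
    using assms by (simp add: zval_def field_simps)
  have b: "[:- cis (\<theta> k), 1:] * [:- cis (- \<theta> k), 1:] = [:1, - complex_of_real (zval y \<theta> k), 1:]" if "k \<in> {1..m}" for k :: nat
  proof -
    have "cis (\<theta> k) * cis (- \<theta> k) = 1" by (simp add: cis_mult)
    moreover have "cis (\<theta> k) + cis (- \<theta> k) = complex_of_real (2 * cos (\<theta> k))"
      by (simp add: complex_eq_iff)
    ultimately show ?thesis using that by (simp add: zval_def algebra_simps)
  qed
  have "{0..m} = insert 0 {1..m}" by auto
  then have "(\<Prod>k\<in>{0..m}. [:1, - complex_of_real (zval y \<theta> k), 1:]) =
     [:1, - complex_of_real (zval y \<theta> 0), 1:] * (\<Prod>k\<in>{1..m}. [:1, - complex_of_real (zval y \<theta> k), 1:])"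
    by simp
  also have "\<dots> = palP m y \<theta>" by (simp only: palP_def a prod.cong[OF refl b])
  finally show ?thesis by simp
qed

lemma coeff_palP:
  assumes "y \<noteq> 0"
  shows "coeff (palP m y \<theta>) d = complex_of_real (\<Sum>s=0..m+1. (-1)^s * real (cf (m+1) s d) * esum m y \<theta> s)"
  unfolding palP_eq[OF assms] coeff_prod_quad[OF finite_atLeastAtMost] esum_def
  by (simp add: of_real_sum of_real_prod)

lemma acoef_eq:
  assumes "y \<noteq> 0" "d \<le> 2*m+2"
  shows "acoef m y \<theta> d = complex_of_real (\<Sum>s=0..m+1. (-1)^s * real (cf (m+1) s d) * esum m y \<theta> s)"
proof (cases "d \<le> m + 1")
  case True
  have "cf (m+1) s (2*m+2-d) = cf (m+1) s d" if "s \<in> {0..m+1}" for s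
    using cf_sym[of s "m+1" d] that assms by auto
  then show ?thesis using True unfolding acoef_def coeff_palP[OF assms(1)] by (auto intro!: sum.cong)
next
  case False
  then show ?thesis unfolding acoef_def coeff_palP[OF assms(1)] by auto
qed

lemma ext_sum:
  "(\<Sum>s=0..m+1. (-1)^s * real (cf (m+1) s d) * esum m y \<theta> s) =
   (\<Sum>s<2*(m+2). (-1)^s * real (cf (m+1) s d) * esum m y \<theta> s)"
  by (rule sum.mono_neutral_left) (auto simp: esum_zero)



lemma cf_o0: "1 \<le> i \<Longrightarrow> cf (m+1) (2*j) (2*i-1) = 0"
proof -
  assume "1 \<le> i"
  then have "odd (2*i - 1 - 2*j)" if "2*j \<le> 2*i - 1" for j :: nat
  proof -
    have "2*i - 1 - 2*j = 2*(i-j-1)+1" using that \<open>1 \<le> i\<close> by linarith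
    then show ?thesis by simp
  qed
  then show ?thesis unfolding cf_def by auto
qed

lemma cf_o1: "1 \<le> i \<Longrightarrow> cf (m+1) (2*j+1) (2*i-1) = (if j < i then (m - 2*j) choose (i - 1 - j) else 0)"
proof -
  assume i: "1 \<le> i"
  show ?thesis
  proof (cases "j < i")
    case True
    then have e: "2*i - 1 - (2*j+1) = 2*(i-1-j)" by simp
    show ?thesis unfolding cf_def e using True by simp
  next
    case False
    then show ?thesis unfolding cf_def by simp
  qed
qed

lemma cf_e0: "cf (m+1) (2*j) (2*i) = (if j \<le> i then (m + 1 - 2*j) choose (i - j) else 0)"
proof (cases "j \<le> i")
  case True
  then have e: "2*i - 2*j = 2*(i-j)" by simp
  show ?thesis unfolding cf_def e using True by simp
next
  case False
  then show ?thesis unfolding cf_def by simp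
qed

lemma cf_e1: "cf (m+1) (2*j+1) (2*i) = 0"
proof -
  have "odd (2*i - (2*j+1))" if "2*j+1 \<le> 2*i"
  proof -
    have "2*i - (2*j+1) = 2*(i-j-1)+1" using that by linarith
    then show ?thesis by simp
  qed
  then show ?thesis unfolding cf_def by auto
qed

lemma p0: "(-1::real)^(2*x) = 1" by (simp add: power_mult)
lemma p1: "(-1::real)^(2*x+1) = -1" by (simp add: power_mult)

lemma aux1: "(-1) * real (if x < i then m - 2 * x choose (i - 1 - x) else 0) * e = (if x < i then - (real (m - 2 * x choose (i - 1 - x)) * e) else 0)"
  by (cases "x < i") simp_all

lemma aux2: "real (if x \<le> i then k else 0) * e = (if x \<le> i then real k * e else 0)"
  by simp

theorem lemma1:
  fixes m :: nat and y H :: real and \<theta> :: "nat \<Rightarrow> real" and i :: nat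
  assumes "m \<ge> 1" and "H > 1" and "1 < y" and "y \<le> H"
    and "\<And>k. k \<in> {1..m} \<Longrightarrow> \<theta> k \<in> {0..pi}"
    and "1 \<le> i" and "i \<le> m div 2 + 1"
  shows "acoef m y \<theta> (2*i - 1) =
           complex_of_real (- (\<Sum>j=0..i-1. (real_of_int (int m - 2 * int j) gchoose (i - j - 1))
                                  * esum m y \<theta> (2*j + 1)))
         \<and> acoef m y \<theta> (2*i) =
           complex_of_real (\<Sum>j=0..i. (real_of_int (int m - 2 * int j + 1) gchoose (i - j))
                                  * esum m y \<theta> (2*j))"
proof
  have y0: "y \<noteq> 0" using assms(3) by simp
  have i1: "1 \<le> i" using assms(6) .
  have "2*(m div 2) \<le> m" by simp
  then have i2: "2*i \<le> m + 2" using assms(7) by linarith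
  let ?e = "esum m y \<theta>"
  show "acoef m y \<theta> (2*i - 1) =
           complex_of_real (- (\<Sum>j=0..i-1. (real_of_int (int m - 2 * int j) gchoose (i - j - 1))
                                  * esum m y \<theta> (2*j + 1)))"
  proof -
    have A: "acoef m y \<theta> (2*i - 1) = complex_of_real (\<Sum>s=0..m+1. (-1)^s * real (cf (m+1) s (2*i-1)) * ?e s)"
      by (rule acoef_eq[OF y0]) (use i2 in linarith)
    have "(\<Sum>s=0..m+1. (-1)^s * real (cf (m+1) s (2*i-1)) * ?e s) =
       (\<Sum>j<m+2. (if j < i then - (real ((m - 2*j) choose (i - 1 - j)) * ?e (2*j+1)) else 0))"
      unfolding ext_sum sum_even_odd
      apply (rule sum.cong, rule refl)
      apply (simp only: cf_o0[OF i1] cf_o1[OF i1] p0 p1 of_nat_0 mult_zero_right mult_zero_left add_0_left mult_1_left)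
      apply (rule aux1)
      done
    also have "\<dots> = (\<Sum>j\<in>{j \<in> {..<m+2}. j < i}. - (real ((m - 2*j) choose (i - 1 - j)) * ?e (2*j+1)))"
      by (rule sum.inter_filter[symmetric]) simp
    also have "{j \<in> {..<m+2}. j < i} = {0..i-1}" using i1 i2 by (intro set_eqI) (simp, linarith)
    also have "(\<Sum>j=0..i-1. - (real ((m - 2*j) choose (i - 1 - j)) * ?e (2*j+1))) =
       - (\<Sum>j=0..i-1. (real_of_int (int m - 2 * int j) gchoose (i - j - 1)) * ?e (2*j + 1))"
      unfolding sum_negf[symmetric]
    proof (rule sum.cong)
      fix j assume jj: "j \<in> {0..i-1}"
      have "2*j \<le> m" using jj i1 i2 by simp
      then have r: "real_of_int (int m - 2 * int j) = real (m - 2*j)" by simp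
      have ij: "i - j - 1 = i - 1 - j" by simp
      have "real ((m - 2*j) choose (i - 1 - j)) = real_of_int (int m - 2 * int j) gchoose (i - j - 1)"
        unfolding r ij by (rule binomial_gbinomial)
      then show "- (real ((m - 2*j) choose (i - 1 - j)) * ?e (2*j+1)) =
         - ((real_of_int (int m - 2 * int j) gchoose (i - j - 1)) * ?e (2*j + 1))" by simp
    qed simp
    finally show ?thesis unfolding A by simp
  qed
  show "acoef m y \<theta> (2*i) =
           complex_of_real (\<Sum>j=0..i. (real_of_int (int m - 2 * int j + 1) gchoose (i - j))
                                  * esum m y \<theta> (2*j))"
  proof -
    have A: "acoef m y \<theta> (2*i) = complex_of_real (\<Sum>s=0..m+1. (-1)^s * real (cf (m+1) s (2*i)) * ?e s)"
      by (rule acoef_eq[OF y0]) (use i2 in linarith)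
    have "(\<Sum>s=0..m+1. (-1)^s * real (cf (m+1) s (2*i)) * ?e s) =
       (\<Sum>j<m+2. (if j \<le> i then real ((m + 1 - 2*j) choose (i - j)) * ?e (2*j) else 0))"
      unfolding ext_sum sum_even_odd
      apply (rule sum.cong, rule refl)
      apply (simp only: cf_e0 cf_e1 p0 p1 of_nat_0 mult_zero_right mult_zero_left add_0_right mult_1_left)
      apply (rule aux2)
      done
    also have "\<dots> = (\<Sum>j\<in>{j \<in> {..<m+2}. j \<le> i}. real ((m + 1 - 2*j) choose (i - j)) * ?e (2*j))"
      by (rule sum.inter_filter[symmetric]) simp
    also have "{j \<in> {..<m+2}. j \<le> i} = {0..i}" using i1 i2 by (intro set_eqI) (simp, linarith)
    also have "(\<Sum>j=0..i. real ((m + 1 - 2*j) choose (i - j)) * ?e (2*j)) =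
       (\<Sum>j=0..i. (real_of_int (int m - 2 * int j + 1) gchoose (i - j)) * ?e (2*j))"
    proof (rule sum.cong)
      fix j assume "j \<in> {0..i}"
      show "real ((m + 1 - 2*j) choose (i - j)) * ?e (2*j) =
         (real_of_int (int m - 2 * int j + 1) gchoose (i - j)) * ?e (2*j)"
      proof (cases "2*j \<le> m + 1")
        case True
        then have "real_of_int (int m - 2 * int j + 1) = real (m + 1 - 2*j)" by simp
        then show ?thesis by (simp add: binomial_gbinomial)
      next
        case False
        then show ?thesis by (simp add: esum_zero)
      qed
    qed simp
    finally show ?thesis unfolding A by simp
  qed
qed

end
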